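(* Fix integers $n_r,n_q\ge1$, symmetric positive definite $M_r\in\mathbb{R}^{n_r\times n_r}$, $M_q\in\mathbb{R}^{n_q\times n_q}$, an arbitrary matrix $G_r\in\mathbb{R}^{n_q\times n_r}$, stiffness coefficients $\gamma_r\in\mathbb{R}^{n_r\times n_r}$, $\gamma_q\in\mathbb{R}^{n_q\times n_q}$ (in particular positive scalars), and $N_{\mathrm{real}}>0$. Suppose that for $i\in\{1,2\}$, $(r_i(t),\mu_i(t))\in\mathbb{R}^{n_r}\times\mathcal P^1(\mathbb{R}^{n_q})$ are solutions of the linear partially kinetic system (defined in the context) with initial conditions $r_i(0)=r^{\mathrm{in}}_i$, $\dot r_i(0)=s^{\mathrm{in}}_i$, $\mu_i(0)=\mu^{\mathrm{in}}_i$. Then there are constants $L,C>0$, independent of the initial conditions, such that for all $t\ge0$ $$\|r_1(t)-r_2(t)\|+\|\dot r_1(t)-\dot r_2(t)\|+W_1(\mu_1(t),\mu_2(t))\le Ce^{Lt}\Big(\|r^{\mathrm{in}}_1-r^{\mathrm{in}}_2\|+\|s^{\mathrm{in}}_1-s^{\mathrm{in}}_2\|+W_1(\mu^{\mathrm{in}}_1,\mu^{\mathrm{in}}_2)\Big).$$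
   Context: $\mathcal P^1(\mathbb{R}^{n_q})$ is the set of Borel probability measures on $\mathbb{R}^{n_q}$ with finite first moment; $\|\cdot\|$ is the Euclidean norm. For a measurable map $\varphi$, $\varphi\#\mu(A):=\mu(\varphi^{-1}(A))$ is the pushforward. Monge–Kantorovich distance: $W_1(\nu,\mu)=\sup\{|\int\phi\,d\nu-\int\phi\,d\mu| : \phi:\mathbb{R}^{n_q}\to\mathbb{R},\ \mathrm{Lip}(\phi)\le1\}$, where $\mathrm{Lip}(\phi)=\sup_{x\ne y}|\phi(x)-\phi(y)|/\|x-y\|$. Linear partially kinetic system: given initial data $r^{\mathrm{in}},s^{\mathrm{in}}\in\mathbb{R}^{n_r}$, $\mu^{\mathrm{in}}\in\mathcal P^1(\mathbb{R}^{n_q})$, a solution consists of a twice differentiable $r:[0,\infty)\to\mathbb{R}^{n_r}$, a characteristic flow $Q:[0,\infty)\times\mathbb{R}^{n_q}\to\mathbb{R}^{n_q}$ differentiable in $t$, and measures $\mu^t$ such that $$\Big(M_r+N_{\mathrm{real}}\int_{\mathbb{R}^{n_q}}G_r^TM_qG_r\,d\mu^t(q)\Big)\ddot r(t)=-\gamma_r r(t)+N_{\mathrm{real}}G_r^T\gamma_q\int_{\mathbb{R}^{n_q}}q\,d\mu^t(q),$$ $$\partial_t Q(t,q^{\mathrm{in}})=-G_r\dot r(t),\quad Q(0,q^{\mathrm{in}})=q^{\mathrm{in}}\ \text{for all }q^{\mathrm{in}}\in\mathbb{R}^{n_q},\qquad \mu^t=Q(t,\cdot)\#\mu^{\mathrm{in}},$$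 with $r(0)=r^{\mathrm{in}}$, $\dot r(0)=s^{\mathrm{in}}$; the pair $(r(t),\mu^t)$ is called the solution. *)

theory Defs
  imports "HOL-Probability.Probability"
begin

text \<open>P^1: Borel probability measures with finite first moment.\<close>
definition P1 :: "('a::euclidean_space) measure \<Rightarrow> bool" where
  "P1 \<mu> \<longleftrightarrow> prob_space \<mu> \<and> sets \<mu> = sets borel \<and> integrable \<mu> (\<lambda>q. norm q)"

text \<open>Monge-Kantorovich distance W_1 (sup over functions with Lip at most 1).\<close>
definition W1 :: "('a::euclidean_space) measure \<Rightarrow> 'a measure \<Rightarrow> real" where
  "W1 \<nu> \<mu> = Sup {\<bar>(\<integral>x. \<phi> x \<partial>\<nu>) - (\<integral>x. \<phi> x \<partial>\<mu>)\<bar> | \<phi>. 1-lipschitz_on UNIV \<phi>}"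

definition sym_pos_def_mat :: "real^'n^'n \<Rightarrow> bool" where
  "sym_pos_def_mat M \<longleftrightarrow> transpose M = M \<and> (\<forall>x. x \<noteq> 0 \<longrightarrow> x \<bullet> (M *v x) > 0)"

text \<open>Solution of the linear partially kinetic system with initial data (rin0, sin0, muin).
  r is the position, s its derivative (velocity), mu t the measures; the second derivative
  of r and the characteristic flow Q are existentially quantified.\<close>
definition lpk_solution ::
  "real^'r^'r \<Rightarrow> real^'q^'q \<Rightarrow> real^'r^'q \<Rightarrow> real^'r^'r \<Rightarrow> real^'q^'q \<Rightarrow> real \<Rightarrow>
   real^'r \<Rightarrow> real^'r \<Rightarrow> (real^'q) measure \<Rightarrow>
   (real \<Rightarrow> real^'r) \<Rightarrow> (real \<Rightarrow> real^'r) \<Rightarrow> (real \<Rightarrow> (real^'q) measure) \<Rightarrow> bool" where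
  "lpk_solution Mr Mq Gr \<gamma>r \<gamma>q Nreal rin0 sin0 \<mu>in r s \<mu> \<longleftrightarrow>
     r 0 = rin0 \<and> s 0 = sin0 \<and>
     (\<exists>r'' Q.
        (\<forall>t\<ge>0. (r has_vector_derivative s t) (at t within {0..}) \<and>
                (s has_vector_derivative r'' t) (at t within {0..}) \<and>
                (Mr + Nreal *\<^sub>R (\<integral>q. transpose Gr ** Mq ** Gr \<partial>(\<mu> t))) *v r'' t
                  = - (\<gamma>r *v r t) + Nreal *\<^sub>R ((transpose Gr ** \<gamma>q) *v (\<integral>q. q \<partial>(\<mu> t)))) \<and>
        (\<forall>q. Q 0 q = q) \<and>
        (\<forall>t\<ge>0. \<forall>q. ((\<lambda>\<tau>. Q \<tau> q) has_vector_derivative (- (Gr *v s t))) (at t within {0..})) \<and>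
        (\<forall>t\<ge>0. Q t \<in> borel_measurable \<mu>in \<and> \<mu> t = distr \<mu>in borel (Q t)))"

end

theory Submission
  imports Defs
begin


lemma P1_meas:
  assumes "P1 \<mu>" shows "measurable \<mu> N = measurable borel N"
  using assms unfolding P1_def by (intro measurable_cong_sets) auto

lemma lip_borel:
  fixes \<phi> :: "'a::euclidean_space \<Rightarrow> real"
  assumes "L-lipschitz_on UNIV \<phi>" shows "\<phi> \<in> borel_measurable borel"
  using lipschitz_on_continuous_on[OF assms] by (intro borel_measurable_continuous_onI)

lemma lip_integrable:
  fixes \<phi> :: "'a::euclidean_space \<Rightarrow> real"
  assumes P: "P1 \<mu>" and l: "1-lipschitz_on UNIV \<phi>"
  shows "integrable \<mu> \<phi>"
proof -
  interpret prob_space \<mu> using P unfolding P1_def by auto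
  have ni: "integrable \<mu> (\<lambda>q. norm q)" using P unfolding P1_def by auto
  have i2: "integrable \<mu> (\<lambda>q. \<bar>\<phi> 0\<bar> + norm q)" using ni by auto
  have m: "\<phi> \<in> borel_measurable \<mu>" using lip_borel[OF l] P1_meas[OF P] by auto
  show ?thesis
  proof (rule Bochner_Integration.integrable_bound[OF i2 m])
    show "AE x in \<mu>. norm (\<phi> x) \<le> norm (\<bar>\<phi> 0\<bar> + norm x)"
    proof (rule AE_I2)
      fix x
      have "dist (\<phi> x) (\<phi> 0) \<le> 1 * dist x 0" using lipschitz_onD[OF l, of x 0] by simp
      then have "\<bar>\<phi> x - \<phi> 0\<bar> \<le> norm x" by (simp add: dist_norm)
      then show "norm (\<phi> x) \<le> norm (\<bar>\<phi> 0\<bar> + norm x)" by auto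
    qed
  qed
qed

lemma lip_diff_bound:
  fixes \<phi> :: "'a::euclidean_space \<Rightarrow> real"
  assumes P: "P1 \<nu>" "P1 \<mu>" and l: "1-lipschitz_on UNIV \<phi>"
  shows "\<bar>(\<integral>x. \<phi> x \<partial>\<nu>) - (\<integral>x. \<phi> x \<partial>\<mu>)\<bar> \<le> (\<integral>x. norm x \<partial>\<nu>) + (\<integral>x. norm x \<partial>\<mu>)"
proof -
  have key: "\<bar>(\<integral>x. \<phi> x \<partial>M) - \<phi> 0\<bar> \<le> (\<integral>x. norm x \<partial>M)" if PM: "P1 M" for M
  proof -
    interpret prob_space M using PM unfolding P1_def by auto
    have ni: "integrable M (\<lambda>q. norm q)" using PM unfolding P1_def by auto
    have i: "integrable M \<phi>" by (rule lip_integrable[OF PM l])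
    have "(\<integral>x. \<phi> x \<partial>M) - \<phi> 0 = (\<integral>x. \<phi> x - \<phi> 0 \<partial>M)"
      using i by (simp add: prob_space)
    also have "\<bar>\<dots>\<bar> \<le> (\<integral>x. norm x \<partial>M)"
    proof (rule integral_abs_bound_integral)
      show "integrable M (\<lambda>x. \<phi> x - \<phi> 0)" using i by auto
      show "integrable M (\<lambda>x. norm x)" by (rule ni)
      fix x
      have "dist (\<phi> x) (\<phi> 0) \<le> 1 * dist x 0" using lipschitz_onD[OF l, of x 0] by simp
      then show "\<bar>\<phi> x - \<phi> 0\<bar> \<le> norm x" by (simp add: dist_norm)
    qed
    finally show ?thesis .
  qed
  show ?thesis using key[OF P(1)] key[OF P(2)] by linarith
qed

lemma W1_upper:
  fixes \<phi> :: "'a::euclidean_space \<Rightarrow> real"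
  assumes P: "P1 \<nu>" "P1 \<mu>" and l: "1-lipschitz_on UNIV \<phi>"
  shows "\<bar>(\<integral>x. \<phi> x \<partial>\<nu>) - (\<integral>x. \<phi> x \<partial>\<mu>)\<bar> \<le> W1 \<nu> \<mu>"
  unfolding W1_def
proof (rule cSup_upper)
  show "\<bar>(\<integral>x. \<phi> x \<partial>\<nu>) - (\<integral>x. \<phi> x \<partial>\<mu>)\<bar> \<in> ({\<bar>(\<integral>x. \<phi> x \<partial>\<nu>) - (\<integral>x. \<phi> x \<partial>\<mu>)\<bar> | \<phi>. 1-lipschitz_on UNIV \<phi>} :: real set)"
    using l by auto
  show "bdd_above ({\<bar>(\<integral>x. \<phi> x \<partial>\<nu>) - (\<integral>x. \<phi> x \<partial>\<mu>)\<bar> | \<phi>. 1-lipschitz_on UNIV \<phi>} :: real set)"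
  proof (rule bdd_aboveI)
    fix x assume "x \<in> ({\<bar>(\<integral>x. \<phi> x \<partial>\<nu>) - (\<integral>x. \<phi> x \<partial>\<mu>)\<bar> | \<phi>. 1-lipschitz_on UNIV \<phi>} :: real set)"
    then obtain \<psi> where "x = \<bar>(\<integral>x. \<psi> x \<partial>\<nu>) - (\<integral>x. \<psi> x \<partial>\<mu>)\<bar>" "1-lipschitz_on UNIV \<psi>" by blast
    then show "x \<le> (\<integral>x. norm x \<partial>\<nu>) + (\<integral>x. norm x \<partial>\<mu>)" using lip_diff_bound[OF P, of \<psi>] by simp
  qed
qed

lemma W1_least:
  fixes \<nu> :: "'a::euclidean_space measure"
  assumes A: "\<And>\<phi>. 1-lipschitz_on UNIV \<phi> \<Longrightarrow> \<bar>(\<integral>x. \<phi> x \<partial>\<nu>) - (\<integral>x. \<phi> x \<partial>\<mu>)\<bar> \<le> B"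
  shows "W1 \<nu> \<mu> \<le> B"
  unfolding W1_def
proof (rule cSup_least)
  have z: "1-lipschitz_on UNIV (\<lambda>x::'a. 0::real)" by (auto intro: lipschitz_onI)
  show "({\<bar>(\<integral>x. \<phi> x \<partial>\<nu>) - (\<integral>x. \<phi> x \<partial>\<mu>)\<bar> | \<phi>. 1-lipschitz_on UNIV \<phi>} :: real set) \<noteq> {}"
  proof -
    have "\<bar>(\<integral>x. (\<lambda>x::'a. 0::real) x \<partial>\<nu>) - (\<integral>x. (\<lambda>x::'a. 0::real) x \<partial>\<mu>)\<bar> \<in> ({\<bar>(\<integral>x. \<phi> x \<partial>\<nu>) - (\<integral>x. \<phi> x \<partial>\<mu>)\<bar> | \<phi>. 1-lipschitz_on UNIV \<phi>} :: real set)"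
      using z by blast
    then show ?thesis by blast
  qed
  fix x assume "x \<in> ({\<bar>(\<integral>x. \<phi> x \<partial>\<nu>) - (\<integral>x. \<phi> x \<partial>\<mu>)\<bar> | \<phi>. 1-lipschitz_on UNIV \<phi>} :: real set)"
  then obtain \<psi> where "x = \<bar>(\<integral>x. \<psi> x \<partial>\<nu>) - (\<integral>x. \<psi> x \<partial>\<mu>)\<bar>" "1-lipschitz_on UNIV \<psi>" by blast
  then show "x \<le> B" using A[of \<psi>] by simp
qed

lemma W1_nonneg:
  fixes \<nu> :: "'a::euclidean_space measure"
  assumes P: "P1 \<nu>" "P1 \<mu>" shows "0 \<le> W1 \<nu> \<mu>"
proof -
  have "1-lipschitz_on UNIV (\<lambda>x::'a. 0::real)" by (auto intro: lipschitz_onI)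
  from W1_upper[OF P this] show ?thesis by simp
qed

lemma P1_integrable_id:
  fixes \<mu> :: "'a::euclidean_space measure"
  assumes P: "P1 \<mu>" shows "integrable \<mu> (\<lambda>x. x)"
proof -
  have m: "(\<lambda>x. x) \<in> borel_measurable \<mu>" unfolding P1_meas[OF P] by measurable
  have "integrable \<mu> (\<lambda>x. norm x)" using P unfolding P1_def by auto
  then show ?thesis by (rule integrable_norm_cancel[OF _ m])
qed

lemma W1_mean:
  fixes \<nu> :: "'a::euclidean_space measure"
  assumes P: "P1 \<nu>" "P1 \<mu>"
  shows "norm ((\<integral>x. x \<partial>\<nu>) - (\<integral>x. x \<partial>\<mu>)) \<le> W1 \<nu> \<mu>"
proof (cases "(\<integral>x. x \<partial>\<nu>) - (\<integral>x. x \<partial>\<mu>) = 0")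
  case True then show ?thesis using W1_nonneg[OF P] by simp
next
  case False
  define v where "v = (\<integral>x. x \<partial>\<nu>) - (\<integral>x. x \<partial>\<mu>)"
  define u where "u = v /\<^sub>R norm v"
  have nu: "norm u = 1" using False unfolding u_def v_def by simp
  have l: "1-lipschitz_on UNIV (\<lambda>x. u \<bullet> x)"
  proof (rule lipschitz_onI)
    fix x y
    have "\<bar>u \<bullet> (x - y)\<bar> \<le> norm u * norm (x - y)" by (rule Cauchy_Schwarz_ineq2)
    then show "dist (u \<bullet> x) (u \<bullet> y) \<le> 1 * dist x y"
      using nu by (simp add: dist_norm inner_diff_right)
  qed simp
  have "\<bar>(\<integral>x. u \<bullet> x \<partial>\<nu>) - (\<integral>x. u \<bullet> x \<partial>\<mu>)\<bar> \<le> W1 \<nu> \<mu>" by (rule W1_upper[OF P l])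
  moreover have "(\<integral>x. u \<bullet> x \<partial>\<nu>) - (\<integral>x. u \<bullet> x \<partial>\<mu>) = u \<bullet> v"
    using P1_integrable_id[OF P(1)] P1_integrable_id[OF P(2)]
    by (simp add: v_def inner_diff_right)
  moreover have "u \<bullet> v = norm v" using False unfolding u_def v_def
    by (simp add: power2_norm_eq_inner[symmetric] power2_eq_square)
  ultimately show ?thesis unfolding v_def by simp
qed

lemma W1_shift:
  fixes \<mu>1 :: "'a::euclidean_space measure"
  assumes P: "P1 \<mu>1" "P1 \<mu>2"
  shows "W1 (distr \<mu>1 borel (\<lambda>q. q + a)) (distr \<mu>2 borel (\<lambda>q. q + b)) \<le> W1 \<mu>1 \<mu>2 + norm (a - b)"
proof (rule W1_least)
  fix \<phi> :: "'a \<Rightarrow> real"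
  assume l: "1-lipschitz_on UNIV \<phi>"
  have la: "1-lipschitz_on UNIV (\<lambda>q. \<phi> (q + c))" for c
  proof (rule lipschitz_onI)
    fix x y show "dist (\<phi> (x + c)) (\<phi> (y + c)) \<le> 1 * dist x y"
      using lipschitz_onD[OF l, of "x + c" "y + c"] by (simp add: dist_norm)
  qed simp
  have mb: "(\<lambda>q. q + c) \<in> measurable M borel" if "P1 M" for M and c :: 'a
    unfolding P1_meas[OF that] by measurable
  have d1: "(\<integral>x. \<phi> x \<partial>distr \<mu>1 borel (\<lambda>q. q + a)) = (\<integral>q. \<phi> (q + a) \<partial>\<mu>1)"
    by (rule integral_distr[OF mb[OF P(1)] lip_borel[OF l]])
  have d2: "(\<integral>x. \<phi> x \<partial>distr \<mu>2 borel (\<lambda>q. q + b)) = (\<integral>q. \<phi> (q + b) \<partial>\<mu>2)"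
    by (rule integral_distr[OF mb[OF P(2)] lip_borel[OF l]])
  have A: "\<bar>(\<integral>q. \<phi> (q + a) \<partial>\<mu>1) - (\<integral>q. \<phi> (q + a) \<partial>\<mu>2)\<bar> \<le> W1 \<mu>1 \<mu>2"
    by (rule W1_upper[OF P la])
  interpret prob_space \<mu>2 using P(2) unfolding P1_def by auto
  have B: "\<bar>(\<integral>q. \<phi> (q + a) \<partial>\<mu>2) - (\<integral>q. \<phi> (q + b) \<partial>\<mu>2)\<bar> \<le> norm (a - b)"
  proof -
    have "(\<integral>q. \<phi> (q + a) \<partial>\<mu>2) - (\<integral>q. \<phi> (q + b) \<partial>\<mu>2) = (\<integral>q. \<phi> (q + a) - \<phi> (q + b) \<partial>\<mu>2)"
      using lip_integrable[OF P(2) la] by simp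
    also have "\<bar>\<dots>\<bar> \<le> (\<integral>q. norm (a - b) \<partial>\<mu>2)"
    proof (rule integral_abs_bound_integral)
      show "integrable \<mu>2 (\<lambda>q. \<phi> (q + a) - \<phi> (q + b))" using lip_integrable[OF P(2) la] by simp
      show "integrable \<mu>2 (\<lambda>q. norm (a - b))" by simp
      fix x show "\<bar>\<phi> (x + a) - \<phi> (x + b)\<bar> \<le> norm (a - b)"
        using lipschitz_onD[OF l, of "x + a" "x + b"] by (simp add: dist_norm)
    qed
    also have "\<dots> = norm (a - b)" by (simp add: prob_space)
    finally show ?thesis .
  qed
  show "\<bar>(\<integral>x. \<phi> x \<partial>distr \<mu>1 borel (\<lambda>q. q + a)) - (\<integral>x. \<phi> x \<partial>distr \<mu>2 borel (\<lambda>q. q + b))\<bar>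
        \<le> W1 \<mu>1 \<mu>2 + norm (a - b)"
    unfolding d1 d2 using A B by (smt (verit) abs_triangle_ineq)
qed



lemma energy_bound:
  fixes d e e' :: "real \<Rightarrow> 'a::real_inner"
  assumes dd: "\<And>t. t \<ge> 0 \<Longrightarrow> (d has_vector_derivative e t) (at t within {0..})"
    and de: "\<And>t. t \<ge> 0 \<Longrightarrow> (e has_vector_derivative e' t) (at t within {0..})"
    and bd: "\<And>t. t \<ge> 0 \<Longrightarrow> norm (e' t) \<le> K * norm (d t) + k"
    and K: "K \<ge> 0" and k: "k \<ge> 0" and t: "t \<ge> 0"
  shows "norm (d t) + norm (e t) \<le> 2 * (norm (d 0) + norm (e 0) + k) * exp ((2 + K) * t)"
proof -
  define L where "L = 2 + K"
  define f where "f s = d s \<bullet> d s + e s \<bullet> e s + k^2" for s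
  define g where "g s = f s * exp (- L * s)" for s
  have fd: "(f has_real_derivative (2 * (d s \<bullet> e s) + 2 * (e s \<bullet> e' s))) (at s within {0..})"
    if s: "s \<ge> 0" for s
  proof -
    have d1: "(d has_derivative (\<lambda>h. h *\<^sub>R e s)) (at s within {0..})"
      using dd[OF s] by (simp add: has_vector_derivative_def)
    have d2: "(e has_derivative (\<lambda>h. h *\<^sub>R e' s)) (at s within {0..})"
      using de[OF s] by (simp add: has_vector_derivative_def)
    have i1: "((\<lambda>x. d x \<bullet> d x) has_derivative (\<lambda>h. d s \<bullet> (h *\<^sub>R e s) + (h *\<^sub>R e s) \<bullet> d s)) (at s within {0..})"
      by (rule has_derivative_inner[OF d1 d1])
    have i2: "((\<lambda>x. e x \<bullet> e x) has_derivative (\<lambda>h. e s \<bullet> (h *\<^sub>R e' s) + (h *\<^sub>R e' s) \<bullet> e s)) (at s within {0..})"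
      by (rule has_derivative_inner[OF d2 d2])
    have i3: "((\<lambda>x. d x \<bullet> d x + e x \<bullet> e x + k^2) has_derivative
       (\<lambda>h. (d s \<bullet> (h *\<^sub>R e s) + (h *\<^sub>R e s) \<bullet> d s) + (e s \<bullet> (h *\<^sub>R e' s) + (h *\<^sub>R e' s) \<bullet> e s) + 0)) (at s within {0..})"
      by (intro has_derivative_add i1 i2 has_derivative_const)
    show ?thesis unfolding has_field_derivative_def f_def
      by (rule has_derivative_eq_rhs[OF i3]) (auto simp: algebra_simps inner_commute)
  qed
  have fbound: "2 * (d s \<bullet> e s) + 2 * (e s \<bullet> e' s) \<le> L * f s" if s: "s \<ge> 0" for s
  proof -
    have a: "d s \<bullet> e s \<le> norm (d s) * norm (e s)" by (rule norm_cauchy_schwarz)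
    have b: "e s \<bullet> e' s \<le> norm (e s) * norm (e' s)" by (rule norm_cauchy_schwarz)
    have c: "norm (e s) * norm (e' s) \<le> k * norm (e s) + K * (norm (d s) * norm (e s))"
      using mult_left_mono[OF bd[OF s], of "norm (e s)"] by (simp add: algebra_simps)
    have x1: "2 * (norm (d s) * norm (e s)) \<le> norm (d s)^2 + norm (e s)^2"
      using sum_squares_bound[of "norm (d s)" "norm (e s)"] by (simp add: power2_eq_square)
    have x2: "2 * (k * norm (e s)) \<le> norm (e s)^2 + k^2"
      using sum_squares_bound[of "norm (e s)" k] by (simp add: power2_eq_square algebra_simps)
    have x3: "2 * (K * (norm (d s) * norm (e s))) \<le> K * norm (d s)^2 + K * norm (e s)^2"
      using mult_left_mono[OF x1 K] by (simp add: algebra_simps)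
    have ff: "L * f s = 2 * norm (d s)^2 + 2 * norm (e s)^2 + 2 * k^2 + K * norm (d s)^2 + K * norm (e s)^2 + K * k^2"
      unfolding f_def L_def by (simp add: power2_norm_eq_inner algebra_simps)
    have "0 \<le> K * k^2" using K by simp
    moreover have "0 \<le> norm (d s)^2" "0 \<le> norm (e s)^2" "0 \<le> k^2" by auto
    ultimately show ?thesis unfolding ff using a b c x1 x2 x3 by linarith
  qed
  have gd: "(g has_real_derivative ((2 * (d s \<bullet> e s) + 2 * (e s \<bullet> e' s)) * exp (- L * s) - f s * (L * exp (- L * s)))) (at s within {0..})"
    if s: "s \<ge> 0" for s
    unfolding g_def
    by (rule derivative_eq_intros fd[OF s] | simp)+
  have gneg: "(2 * (d s \<bullet> e s) + 2 * (e s \<bullet> e' s)) * exp (- L * s) - f s * (L * exp (- L * s)) \<le> 0"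
    if s: "s \<ge> 0" for s
  proof -
    have "(2 * (d s \<bullet> e s) + 2 * (e s \<bullet> e' s)) * exp (- L * s) \<le> (L * f s) * exp (- L * s)"
      using fbound[OF s] by (simp add: mult_right_mono)
    then show ?thesis by (simp add: algebra_simps)
  qed
  have "g t \<le> g 0"
  proof -
    define G' where "G' x = (2 * (d x \<bullet> e x) + 2 * (e x \<bullet> e' x)) * exp (- L * x) - f x * (L * exp (- L * x))" for x
    have "\<exists>x\<in>{0..t}. g t - g 0 = (\<lambda>h. h * G' x) (t - 0)"
    proof (rule mvt_very_simple[OF t])
      fix x assume "0 \<le> x" "x \<le> t"
      then show "(g has_derivative (\<lambda>h. h * G' x)) (at x within {0..t})"
      proof -
        have "(g has_derivative (*) (G' x)) (at x within {0..t})"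
          using \<open>0 \<le> x\<close> gd[of x] unfolding has_field_derivative_def G'_def
          by (auto intro: has_derivative_subset)
        moreover have "(\<lambda>h. h * G' x) = (*) (G' x)" by (auto simp: mult.commute)
        ultimately show ?thesis by simp
      qed
    qed
    then obtain x where x: "x \<in> {0..t}" and eq: "g t - g 0 = (t - 0) * G' x" by auto
    then show ?thesis proof -
      have "G' x \<le> 0" using gneg[of x] x unfolding G'_def by auto
      then have "(t - 0) * G' x \<le> 0" using t by (simp add: mult_nonneg_nonpos)
      then show ?thesis using eq by linarith
    qed
  qed
  then have ft: "f t \<le> f 0 * exp (L * t)"
    unfolding g_def by (simp add: exp_minus field_simps)
  have f0: "f 0 \<le> (norm (d 0) + norm (e 0) + k)^2"
    unfolding f_def using k by (simp add: power2_norm_eq_inner[symmetric] power2_eq_square algebra_simps)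
  have e1: "1 \<le> exp (L * t)" using t K unfolding L_def by simp
  have "(norm (d t) + norm (e t))^2 \<le> 2 * f t"
    unfolding f_def using sum_squares_bound[of "norm (d t)" "norm (e t)"] 
    by (simp add: power2_norm_eq_inner[symmetric] power2_eq_square algebra_simps) (smt (verit) k mult_nonneg_nonneg)
  also have "\<dots> \<le> 2 * (norm (d 0) + norm (e 0) + k)^2 * exp (L * t)"
  proof -
    have "f 0 * exp (L * t) \<le> (norm (d 0) + norm (e 0) + k)^2 * exp (L * t)"
      by (rule mult_right_mono[OF f0]) simp
    then show ?thesis using ft by linarith
  qed
  also have "\<dots> \<le> (2 * (norm (d 0) + norm (e 0) + k) * exp (L * t))^2"
  proof -
    define S where "S = (norm (d 0) + norm (e 0) + k)^2"
    define E where "E = exp (L * t)"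
    have E1: "1 \<le> E" using e1 unfolding E_def .
    have "E \<le> E * E" using E1 by (simp add: mult_le_cancel_left1)
    then have "S * E \<le> S * (E * E)" by (rule mult_left_mono) (simp add: S_def)
    moreover have "(2 * (norm (d 0) + norm (e 0) + k) * exp (L * t))^2 = 4 * (S * (E * E))"
      unfolding S_def E_def by (simp add: power_mult_distrib power2_eq_square algebra_simps)
    moreover have "0 \<le> S * E" using E1 by (simp add: S_def)
    ultimately show ?thesis unfolding S_def E_def by linarith
  qed
  finally have sq: "(norm (d t) + norm (e t))^2 \<le> (2 * (norm (d 0) + norm (e 0) + k) * exp (L * t))^2" .
  have "0 \<le> 2 * (norm (d 0) + norm (e 0) + k) * exp (L * t)" using k by simp
  from power2_le_imp_le[OF sq this] show ?thesis unfolding L_def .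
qed



lemma sol_facts:
  fixes Mr :: "real^'r^'r" and Mq :: "real^'q^'q" and Gr :: "real^'r^'q"
    and \<gamma>r :: "real^'r^'r" and \<gamma>q :: "real^'q^'q" and Nreal :: real
  assumes sol: "lpk_solution Mr Mq Gr \<gamma>r \<gamma>q Nreal rin sv \<mu>in r s \<mu>"
    and Pin: "P1 \<mu>in" and Pt: "\<forall>t\<ge>0. P1 (\<mu> t)"
  shows "\<exists>r''. (\<forall>t\<ge>0. (r has_vector_derivative s t) (at t within {0..}) \<and>
                (s has_vector_derivative r'' t) (at t within {0..}) \<and>
                (Mr + Nreal *\<^sub>R (transpose Gr ** Mq ** Gr)) *v r'' t
                  = - (\<gamma>r *v r t) + Nreal *\<^sub>R ((transpose Gr ** \<gamma>q) *v ((\<integral>q. q \<partial>\<mu>in) - Gr *v (r t - rin)))) \<and>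
             (\<forall>t\<ge>0. \<mu> t = distr \<mu>in borel (\<lambda>q. q + - (Gr *v (r t - rin))))"
proof -
  from sol obtain r'' Q where r0: "r 0 = rin" and s0: "s 0 = sv"
    and ode: "\<forall>t\<ge>0. (r has_vector_derivative s t) (at t within {0..}) \<and>
                (s has_vector_derivative r'' t) (at t within {0..}) \<and>
                (Mr + Nreal *\<^sub>R (\<integral>q. transpose Gr ** Mq ** Gr \<partial>(\<mu> t))) *v r'' t
                  = - (\<gamma>r *v r t) + Nreal *\<^sub>R ((transpose Gr ** \<gamma>q) *v (\<integral>q. q \<partial>(\<mu> t)))"
    and Q0: "\<forall>q. Q 0 q = q"
    and Qd: "\<forall>t\<ge>0. \<forall>q. ((\<lambda>\<tau>. Q \<tau> q) has_vector_derivative (- (Gr *v s t))) (at t within {0..})"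
    and Qm: "\<forall>t\<ge>0. Q t \<in> borel_measurable \<mu>in \<and> \<mu> t = distr \<mu>in borel (Q t)"
    unfolding lpk_solution_def by blast
  have Qf: "Q t = (\<lambda>q. q + - (Gr *v (r t - rin)))" if t: "t \<ge> 0" for t
  proof
    fix q
    have "\<forall>x\<in>{0::real..}. ((\<lambda>\<tau>. Q \<tau> q + Gr *v r \<tau>) has_vector_derivative 0) (at x within {0..})"
    proof
      fix x :: real assume "x \<in> {0..}"
      then have x: "x \<ge> 0" by simp
      have "((\<lambda>\<tau>. Gr *v r \<tau>) has_vector_derivative Gr *v s x) (at x within {0..})"
        using bounded_linear.has_vector_derivative[OF matrix_vector_mul_bounded_linear] ode x by blast
      from has_vector_derivative_add[OF Qd[rule_format, OF x, of q] this]
      show "((\<lambda>\<tau>. Q \<tau> q + Gr *v r \<tau>) has_vector_derivative 0) (at x within {0..})" by simp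
    qed
    then obtain c where c: "\<And>x. x \<in> {0::real..} \<Longrightarrow> Q x q + Gr *v r x = c"
      using has_vector_derivative_zero_constant[of "{0::real..}" "\<lambda>\<tau>. Q \<tau> q + Gr *v r \<tau>"]
      by (metis convex_real_interval(1))
    have "c = q + Gr *v rin" using c[of 0] Q0 r0 by simp
    then have "Q t q + Gr *v r t = q + Gr *v rin" using c[of t] t by simp
    then show "Q t q = q + - (Gr *v (r t - rin))"
      by (simp add: matrix_vector_mult_diff_distrib algebra_simps)
  qed
  have mean: "(\<integral>q. q \<partial>(\<mu> t)) = (\<integral>q. q \<partial>\<mu>in) - Gr *v (r t - rin)" if t: "t \<ge> 0" for t
  proof -
    interpret prob_space \<mu>in using Pin unfolding P1_def by auto
    have mb: "(\<lambda>q. q + - (Gr *v (r t - rin))) \<in> measurable \<mu>in borel"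
      unfolding P1_meas[OF Pin] by measurable
    have "(\<integral>q. q \<partial>(\<mu> t)) = (\<integral>q. q + - (Gr *v (r t - rin)) \<partial>\<mu>in)"
      using Qm t Qf[OF t] integral_distr[OF mb, of "\<lambda>x. x"] by simp
    also have "\<dots> = (\<integral>q. q \<partial>\<mu>in) - Gr *v (r t - rin)"
      using P1_integrable_id[OF Pin] by (simp add: prob_space)
    finally show ?thesis .
  qed
  have cst: "(\<integral>q. transpose Gr ** Mq ** Gr \<partial>(\<mu> t)) = transpose Gr ** Mq ** Gr" if t: "t \<ge> 0" for t
  proof -
    interpret prob_space "\<mu> t" using Pt t unfolding P1_def by auto
    show ?thesis by (simp add: prob_space)
  qed
  show ?thesis
  proof (intro exI[of _ r''] conjI allI impI)
    fix t :: real assume t: "t \<ge> 0"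
    show "(r has_vector_derivative s t) (at t within {0..})" using ode t by blast
    show "(s has_vector_derivative r'' t) (at t within {0..})" using ode t by blast
    show "(Mr + Nreal *\<^sub>R (transpose Gr ** Mq ** Gr)) *v r'' t
                  = - (\<gamma>r *v r t) + Nreal *\<^sub>R ((transpose Gr ** \<gamma>q) *v ((\<integral>q. q \<partial>\<mu>in) - Gr *v (r t - rin)))"
      using ode t cst[OF t] mean[OF t] by metis
    show "\<mu> t = distr \<mu>in borel (\<lambda>q. q + - (Gr *v (r t - rin)))"
      using Qm t Qf[OF t] by simp
  qed
qed



lemma mv_neg: fixes A :: "real^'n^'m" shows "A *v (- x) = - (A *v x)"
  using matrix_vector_mult_diff_distrib[of A 0 x] by simp

lemma mat_bound: fixes B :: "real^'n^'m" shows "\<exists>K>0. \<forall>x. norm (B *v x) \<le> K * norm x"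
  using bounded_linear.pos_bounded[OF matrix_vector_mul_bounded_linear[of B]]
  by (auto simp: mult.commute)

lemma transpose_inner: fixes G :: "real^'n^'m"
  shows "z \<bullet> (transpose G *v w) = (G *v z) \<bullet> w"
proof -
  have "transpose G *v w = w v* G"
    using vector_transpose_matrix[of w "transpose G"] by simp
  then show ?thesis using dot_lmul_matrix[of w G z] by (simp add: inner_commute)
qed

lemma A_left_inv:
  fixes Mr :: "real^'r^'r" and Mq :: "real^'q^'q" and Gr :: "real^'r^'q" and Nreal :: real
  assumes "sym_pos_def_mat Mr" "sym_pos_def_mat Mq" "Nreal > 0"
  shows "\<exists>Ainv. Ainv ** (Mr + Nreal *\<^sub>R (transpose Gr ** Mq ** Gr)) = mat 1"
proof -
  let ?A = "Mr + Nreal *\<^sub>R (transpose Gr ** Mq ** Gr)"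
  have pos: "z \<bullet> (?A *v z) > 0" if "z \<noteq> 0" for z
  proof -
    have a: "z \<bullet> (Mr *v z) > 0" using assms(1) that unfolding sym_pos_def_mat_def by auto
    have b: "(Gr *v z) \<bullet> (Mq *v (Gr *v z)) \<ge> 0"
      using assms(2) unfolding sym_pos_def_mat_def
      by (cases "Gr *v z = 0") (auto simp: less_imp_le)
    have "z \<bullet> (?A *v z) = z \<bullet> (Mr *v z) + Nreal * ((Gr *v z) \<bullet> (Mq *v (Gr *v z)))"
      by (simp add: matrix_vector_mult_add_rdistrib scaleR_matrix_vector_assoc[symmetric]
          inner_add_right matrix_vector_mul_assoc[symmetric] transpose_inner)
        (metis dot_lmul_matrix inner_commute)
    then show ?thesis using a b assms(3) by (smt (verit) mult_nonneg_nonneg)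
  qed
  have "inj ((*v) ?A)"
  proof (rule injI)
    fix x y assume "?A *v x = ?A *v y"
    then have "?A *v (x - y) = 0" by (simp add: matrix_vector_mult_diff_distrib)
    then show "x = y" using pos[of "x - y"] by (cases "x - y = 0") auto
  qed
  then show ?thesis using matrix_left_invertible_injective by blast
qed

lemma sol_init:
  assumes "lpk_solution Mr Mq Gr \<gamma>r \<gamma>q Nreal rin sv \<mu>in r s \<mu>"
  shows "r 0 = rin" "s 0 = sv"
  using assms unfolding lpk_solution_def by blast+



theorem theorem1:
  fixes Mr :: "real^'r^'r" and Mq :: "real^'q^'q" and Gr :: "real^'r^'q"
    and \<gamma>r :: "real^'r^'r" and \<gamma>q :: "real^'q^'q" and Nreal :: real
  assumes "sym_pos_def_mat Mr" and "sym_pos_def_mat Mq" and "Nreal > 0"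
  shows "\<exists>L C. L > 0 \<and> C > 0 \<and>
    (\<forall>rin1 sv1 \<mu>in1 r1 s1 \<mu>1 rin2 sv2 \<mu>in2 r2 s2 \<mu>2.
       P1 \<mu>in1 \<longrightarrow> P1 \<mu>in2 \<longrightarrow>
       (\<forall>t\<ge>0. P1 (\<mu>1 t) \<and> P1 (\<mu>2 t)) \<longrightarrow>
       lpk_solution Mr Mq Gr \<gamma>r \<gamma>q Nreal rin1 sv1 \<mu>in1 r1 s1 \<mu>1 \<longrightarrow>
       lpk_solution Mr Mq Gr \<gamma>r \<gamma>q Nreal rin2 sv2 \<mu>in2 r2 s2 \<mu>2 \<longrightarrow>
       (\<forall>t\<ge>0. norm (r1 t - r2 t) + norm (s1 t - s2 t) + W1 (\<mu>1 t) (\<mu>2 t)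
          \<le> C * exp (L * t) * (norm (rin1 - rin2) + norm (sv1 - sv2) + W1 \<mu>in1 \<mu>in2)))"
proof -
  define A where "A = Mr + Nreal *\<^sub>R (transpose Gr ** Mq ** Gr)"
  define H where "H = transpose Gr ** \<gamma>q"
  obtain Ainv where Ainv: "Ainv ** A = mat 1" using A_left_inv[OF assms] unfolding A_def by blast
  obtain KA where KA: "KA > 0" "\<And>x. norm (Ainv *v x) \<le> KA * norm x" using mat_bound[of Ainv] by blast
  obtain Kg where Kg: "Kg > 0" "\<And>x. norm (\<gamma>r *v x) \<le> Kg * norm x" using mat_bound[of \<gamma>r] by blast
  obtain KG where KG: "KG > 0" "\<And>x. norm (Gr *v x) \<le> KG * norm x" using mat_bound[of Gr] by blast
  obtain KH where KH: "KH > 0" "\<And>x. norm (H *v x) \<le> KH * norm x" using mat_bound[of H] by blast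
  define KB where "KB = KA * (Kg + Nreal * KH * KG)"
  define Kc where "Kc = KA * Nreal * KH * (1 + KG)"
  define L where "L = 2 + KB"
  define C where "C = 2 * (1 + KG) * (1 + Kc) + 1 + KG"
  have N: "Nreal > 0" by fact
  have KBpos: "KB \<ge> 0" unfolding KB_def using KA Kg KG KH N by simp
  have Kcpos: "Kc \<ge> 0" unfolding Kc_def using KA KG KH N by simp
  show ?thesis
  proof (rule exI[of _ L], rule exI[of _ C], intro conjI allI impI)
    show "L > 0" unfolding L_def using KBpos by simp
    show "C > 0" unfolding C_def using KG Kcpos by (simp add: add_pos_nonneg)
    fix rin1 sv1 \<mu>in1 r1 s1 \<mu>1 rin2 sv2 \<mu>in2 r2 s2 \<mu>2 and t :: real
    assume Pin1: "P1 \<mu>in1" and Pin2: "P1 \<mu>in2" and Pt: "\<forall>t\<ge>0. P1 (\<mu>1 t) \<and> P1 (\<mu>2 t)"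
      and sol1: "lpk_solution Mr Mq Gr \<gamma>r \<gamma>q Nreal rin1 sv1 \<mu>in1 r1 s1 \<mu>1"
      and sol2: "lpk_solution Mr Mq Gr \<gamma>r \<gamma>q Nreal rin2 sv2 \<mu>in2 r2 s2 \<mu>2"
      and t: "0 \<le> t"
    obtain a1 where F1: "\<forall>t\<ge>0. (r1 has_vector_derivative s1 t) (at t within {0..}) \<and>
                (s1 has_vector_derivative a1 t) (at t within {0..}) \<and>
                A *v a1 t = - (\<gamma>r *v r1 t) + Nreal *\<^sub>R (H *v ((\<integral>q. q \<partial>\<mu>in1) - Gr *v (r1 t - rin1)))"
      and M1: "\<forall>t\<ge>0. \<mu>1 t = distr \<mu>in1 borel (\<lambda>q. q + - (Gr *v (r1 t - rin1)))"
      using sol_facts[OF sol1 Pin1] Pt unfolding A_def H_def by blast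
    obtain a2 where F2: "\<forall>t\<ge>0. (r2 has_vector_derivative s2 t) (at t within {0..}) \<and>
                (s2 has_vector_derivative a2 t) (at t within {0..}) \<and>
                A *v a2 t = - (\<gamma>r *v r2 t) + Nreal *\<^sub>R (H *v ((\<integral>q. q \<partial>\<mu>in2) - Gr *v (r2 t - rin2)))"
      and M2: "\<forall>t\<ge>0. \<mu>2 t = distr \<mu>in2 borel (\<lambda>q. q + - (Gr *v (r2 t - rin2)))"
      using sol_facts[OF sol2 Pin2] Pt unfolding A_def H_def by blast
    define d where "d \<tau> = r1 \<tau> - r2 \<tau>" for \<tau>
    define e where "e \<tau> = s1 \<tau> - s2 \<tau>" for \<tau>
    define e' where "e' \<tau> = a1 \<tau> - a2 \<tau>" for \<tau>
    define d0 where "d0 = rin1 - rin2"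
    define W0 where "W0 = W1 \<mu>in1 \<mu>in2"
    define dm where "dm = (\<integral>q. q \<partial>\<mu>in1) - (\<integral>q. q \<partial>\<mu>in2)"
    define k where "k = Kc * (W0 + norm d0)"
    have W0pos: "W0 \<ge> 0" unfolding W0_def by (rule W1_nonneg[OF Pin1 Pin2])
    have dmW: "norm dm \<le> W0" unfolding dm_def W0_def by (rule W1_mean[OF Pin1 Pin2])
    have kpos: "k \<ge> 0" unfolding k_def using Kcpos W0pos by simp
    have dd: "(d has_vector_derivative e \<tau>) (at \<tau> within {0..})" if "\<tau> \<ge> 0" for \<tau>
      unfolding d_def e_def using F1 F2 that by (intro has_vector_derivative_diff) auto
    have de: "(e has_vector_derivative e' \<tau>) (at \<tau> within {0..})" if "\<tau> \<ge> 0" for \<tau>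
      unfolding e_def e'_def using F1 F2 that by (intro has_vector_derivative_diff) auto
    have bd: "norm (e' \<tau>) \<le> KB * norm (d \<tau>) + k" if \<tau>: "\<tau> \<ge> 0" for \<tau>
    proof -
      have eq: "A *v e' \<tau> = - (\<gamma>r *v d \<tau>) + Nreal *\<^sub>R (H *v (dm - Gr *v d \<tau> + Gr *v d0))"
      proof -
        have q1: "A *v a1 \<tau> = - (\<gamma>r *v r1 \<tau>) + Nreal *\<^sub>R (H *v ((\<integral>q. q \<partial>\<mu>in1) - Gr *v (r1 \<tau> - rin1)))"
          using F1 \<tau> by blast
        have q2: "A *v a2 \<tau> = - (\<gamma>r *v r2 \<tau>) + Nreal *\<^sub>R (H *v ((\<integral>q. q \<partial>\<mu>in2) - Gr *v (r2 \<tau> - rin2)))"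
          using F2 \<tau> by blast
        have "A *v e' \<tau> = A *v a1 \<tau> - A *v a2 \<tau>" by (simp add: e'_def matrix_vector_mult_diff_distrib)
        also have "\<dots> = (- (\<gamma>r *v r1 \<tau>) + Nreal *\<^sub>R (H *v ((\<integral>q. q \<partial>\<mu>in1) - Gr *v (r1 \<tau> - rin1))))
           - (- (\<gamma>r *v r2 \<tau>) + Nreal *\<^sub>R (H *v ((\<integral>q. q \<partial>\<mu>in2) - Gr *v (r2 \<tau> - rin2))))"
          unfolding q1 q2 ..
        also have "\<dots> = - (\<gamma>r *v d \<tau>) + Nreal *\<^sub>R (H *v (dm - Gr *v d \<tau> + Gr *v d0))"
          unfolding d_def dm_def d0_def
          by (simp add: matrix_vector_mult_diff_distrib matrix_vector_right_distrib algebra_simps)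
        finally show ?thesis .
      qed
      have "e' \<tau> = Ainv *v (A *v e' \<tau>)" by (simp add: matrix_vector_mul_assoc Ainv)
      then have "norm (e' \<tau>) \<le> KA * norm (A *v e' \<tau>)" using KA(2) by metis
      also have "norm (A *v e' \<tau>) \<le> Kg * norm (d \<tau>) + Nreal * (KH * (W0 + KG * norm (d \<tau>) + KG * norm d0))"
      proof -
        have n1: "norm (- (\<gamma>r *v d \<tau>)) \<le> Kg * norm (d \<tau>)" using Kg(2) by simp
        have n2: "norm (dm - Gr *v d \<tau> + Gr *v d0) \<le> W0 + KG * norm (d \<tau>) + KG * norm d0"
          using dmW KG(2)[of "d \<tau>"] KG(2)[of d0] norm_triangle_ineq4[of dm "Gr *v d \<tau>"]
            norm_triangle_ineq[of "dm - Gr *v d \<tau>" "Gr *v d0"] by linarith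
        have n3: "norm (H *v (dm - Gr *v d \<tau> + Gr *v d0)) \<le> KH * (W0 + KG * norm (d \<tau>) + KG * norm d0)"
          using KH(2) n2 KH(1) by (smt (verit) mult_left_mono)
        have n4: "norm (Nreal *\<^sub>R (H *v (dm - Gr *v d \<tau> + Gr *v d0))) \<le> Nreal * (KH * (W0 + KG * norm (d \<tau>) + KG * norm d0))"
          using n3 N by (simp add: mult_left_mono)
        show ?thesis unfolding eq using n1 n4 norm_triangle_ineq by (smt (verit))
      qed
      then have "KA * norm (A *v e' \<tau>) \<le> KA * (Kg * norm (d \<tau>) + Nreal * (KH * (W0 + KG * norm (d \<tau>) + KG * norm d0)))"
        using KA(1) by (simp add: mult_left_mono)
      also have "\<dots> = KB * norm (d \<tau>) + KA * Nreal * KH * (W0 + KG * norm d0)"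
        unfolding KB_def by (simp add: algebra_simps)
      also have "\<dots> \<le> KB * norm (d \<tau>) + k"
      proof -
        have "W0 + KG * norm d0 \<le> (1 + KG) * (W0 + norm d0)" using KG(1) W0pos by (simp add: algebra_simps)
        moreover have "0 \<le> KA * Nreal * KH" using KA KH N by simp
        ultimately have "KA * Nreal * KH * (W0 + KG * norm d0) \<le> KA * Nreal * KH * ((1 + KG) * (W0 + norm d0))"
          by (rule mult_left_mono)
        then show ?thesis unfolding k_def Kc_def by (simp add: algebra_simps)
      qed
      finally show ?thesis .
    qed
    have en: "norm (d t) + norm (e t) \<le> 2 * (norm (d 0) + norm (e 0) + k) * exp ((2 + KB) * t)"
      by (rule energy_bound[OF dd de bd KBpos kpos t])
    have d00: "d 0 = d0" "e 0 = sv1 - sv2"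
      unfolding d_def d0_def e_def using sol_init[OF sol1] sol_init[OF sol2] by auto
    have Wt: "W1 (\<mu>1 t) (\<mu>2 t) \<le> W0 + KG * (norm (d t) + norm d0)"
    proof -
      have "W1 (\<mu>1 t) (\<mu>2 t) \<le> W0 + norm (- (Gr *v (r1 t - rin1)) - - (Gr *v (r2 t - rin2)))"
        using W1_shift[OF Pin1 Pin2, of "- (Gr *v (r1 t - rin1))" "- (Gr *v (r2 t - rin2))"] M1 M2 t
        unfolding W0_def by metis
      also have "- (Gr *v (r1 t - rin1)) - - (Gr *v (r2 t - rin2)) = - (Gr *v (d t - d0))"
        unfolding d_def d0_def by (simp add: matrix_vector_mult_diff_distrib algebra_simps)
      also have "norm (- (Gr *v (d t - d0))) \<le> KG * norm (d t - d0)" using KG(2) by simp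
      also have "\<dots> \<le> KG * (norm (d t) + norm d0)"
        using KG(1) norm_triangle_ineq4[of "d t" d0] by (simp add: mult_left_mono)
      finally show ?thesis by simp
    qed
    define X where "X = norm d0 + norm (sv1 - sv2) + W0"
    define E where "E = exp (L * t)"
    have E1: "E \<ge> 1" unfolding E_def L_def using t KBpos by simp
    have Xpos: "X \<ge> 0" unfolding X_def using W0pos by simp
    have s1: "norm d0 + norm (sv1 - sv2) + k \<le> (1 + Kc) * X"
      unfolding k_def X_def using Kcpos W0pos by (simp add: algebra_simps mult_left_mono)
    have s2: "norm (d t) + norm (e t) \<le> 2 * ((1 + Kc) * X) * E"
    proof -
      have h: "2 * (norm d0 + norm (sv1 - sv2) + k) * E \<le> 2 * ((1 + Kc) * X) * E"
        by (rule mult_right_mono) (use s1 E1 in auto)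
      have "norm (d t) + norm (e t) \<le> 2 * (norm d0 + norm (sv1 - sv2) + k) * E"
        using en unfolding d00 E_def L_def .
      then show ?thesis using h by linarith
    qed
    have s3: "W0 + KG * norm d0 \<le> (1 + KG) * X * E"
    proof -
      have "W0 + KG * norm d0 \<le> (1 + KG) * X" unfolding X_def using KG(1) W0pos
        by (simp add: algebra_simps)
      also have "\<dots> \<le> (1 + KG) * X * E"
      proof -
        have "0 \<le> (1 + KG) * X" using KG(1) Xpos by simp
        then show ?thesis using mult_left_mono[OF E1, of "(1 + KG) * X"] by simp
      qed
      finally show ?thesis .
    qed
    have "norm (d t) + norm (e t) + W1 (\<mu>1 t) (\<mu>2 t) \<le> (1 + KG) * (norm (d t) + norm (e t)) + (W0 + KG * norm d0)"
    proof -
      have "0 \<le> KG * norm (e t)" using KG(1) by simp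
      moreover have "(1 + KG) * (norm (d t) + norm (e t)) = norm (d t) + norm (e t) + KG * norm (d t) + KG * norm (e t)"
        by (simp add: algebra_simps)
      moreover have "KG * (norm (d t) + norm d0) = KG * norm (d t) + KG * norm d0" by (simp add: algebra_simps)
      ultimately show ?thesis using Wt by (smt (verit))
    qed
    also have "\<dots> \<le> (1 + KG) * (2 * ((1 + Kc) * X) * E) + (1 + KG) * X * E"
      using s2 s3 KG(1) by (smt (verit) mult_left_mono)
    also have "\<dots> = C * E * X" unfolding C_def by (simp add: algebra_simps)
    finally show "norm (r1 t - r2 t) + norm (s1 t - s2 t) + W1 (\<mu>1 t) (\<mu>2 t)
          \<le> C * exp (L * t) * (norm (rin1 - rin2) + norm (sv1 - sv2) + W1 \<mu>in1 \<mu>in2)"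
      unfolding d_def e_def E_def X_def d0_def W0_def .
  qed
qed


end
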